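(* For every integer $d\ge3$, the family of sets $(\mathsf U_{d,s})_{s\ge1}$ is not increasing with respect to inclusion: there exist integers $1\le s<t$ such that $\mathsf U_{d,s}\not\subseteq\mathsf U_{d,t}$.
   Context: For $U\in\mathcal U(ds)$ (unitary $ds\times ds$ matrices) viewed as a $d\times d$ block matrix with blocks $U_{ij}\in M_s(\mathbb C)$, $\phi_{d,s}(U)=\big(\tfrac1s\|U_{ij}\|_F^2\big)_{i,j=1}^d$ with $\|X\|_F=\operatorname{Tr}(XX^* )^{1/2}$, and $\mathsf U_{d,s}:=\phi_{d,s}(\mathcal U(ds))$. *)

theory Defs
  imports "Jordan_Normal_Form.Matrix" "HOL.Complex"
begin

definition mat_adj :: "complex mat \<Rightarrow> complex mat" where
  "mat_adj U = mat (dim_col U) (dim_row U) (\<lambda>(i,j). cnj (U $$ (j,i)))"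

definition unitary_mats :: "nat \<Rightarrow> complex mat set" where
  "unitary_mats n = {U. U \<in> carrier_mat n n \<and> U * mat_adj U = 1\<^sub>m n \<and> mat_adj U * U = 1\<^sub>m n}"

definition block :: "nat \<Rightarrow> complex mat \<Rightarrow> nat \<Rightarrow> nat \<Rightarrow> complex mat" where
  "block s U i j = mat s s (\<lambda>(a,b). U $$ (i*s + a, j*s + b))"

definition frob_sq :: "complex mat \<Rightarrow> real" where
  "frob_sq X = Re (\<Sum>i<dim_row X. (X * mat_adj X) $$ (i,i))"

definition phi :: "nat \<Rightarrow> nat \<Rightarrow> complex mat \<Rightarrow> real mat" where
  "phi d s U = mat d d (\<lambda>(i,j). frob_sq (block s U i j) / real s)"

definition Uds :: "nat \<Rightarrow> nat \<Rightarrow> real mat set" where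
  "Uds d s = phi d s ` unitary_mats (d*s)"

end

theory Submission
  imports Defs "Jordan_Normal_Form.Schur_Decomposition"
begin

lemma sum_split_add: "(\<Sum>k<a+s. f k) = (\<Sum>k<a. f k) + (\<Sum>c<s. f (a+c::nat))"
  by (induction s) (auto simp: add.assoc)

lemma sum_blocks: "(\<Sum>k<d*s. f k) = (\<Sum>j<d. \<Sum>c<s. f (j*s+c::nat))"
proof (induction d)
  case 0 then show ?case by simp
next
  case (Suc d)
  have "(\<Sum>k<Suc d*s. f k) = (\<Sum>k<d*s. f k) + (\<Sum>c<s. f (d*s+c))"
    using sum_split_add[of f "d*s" s] by (simp add: add.commute)  
  then show ?case using Suc by simp
qed

lemma frob_sq_eq: assumes "X \<in> carrier_mat m n"
  shows "frob_sq X = (\<Sum>i<m. \<Sum>k<n. (cmod (X$$(i,k)))^2)"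
proof -
  have "(X * mat_adj X) $$ (i,i) = complex_of_real (\<Sum>k<n. (cmod (X$$(i,k)))^2)" if "i<m" for i
    using assms that by (auto simp: mat_adj_def scalar_prod_def lessThan_atLeast0 intro!: sum.cong simp flip: complex_norm_square)
  then show ?thesis using assms unfolding frob_sq_def by (simp add: Re_sum)
qed

lemma frob_block: "frob_sq (block s U i j) = (\<Sum>a<s. \<Sum>b<s. (cmod (U$$(i*s+a,j*s+b)))^2)"
  by (subst frob_sq_eq[of _ s s]) (auto simp: block_def intro!: sum.cong)

definition mtr :: "complex mat \<Rightarrow> complex" where
  "mtr X = (\<Sum>i<dim_row X. X $$ (i,i))"

lemma mtr_comm: assumes "X \<in> carrier_mat n m" "Y \<in> carrier_mat m n"
  shows "mtr (X * Y) = mtr (Y * X)"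
proof -
  have "mtr (X * Y) = (\<Sum>i<n. \<Sum>k<m. X$$(i,k) * Y$$(k,i))"
    using assms by (auto simp: mtr_def scalar_prod_def lessThan_atLeast0 intro!: sum.cong)
  also have "\<dots> = (\<Sum>k<m. \<Sum>i<n. Y$$(k,i) * X$$(i,k))"
    by (subst sum.swap) (simp add: mult.commute)
  also have "\<dots> = mtr (Y * X)"
    using assms by (auto simp: mtr_def scalar_prod_def lessThan_atLeast0 intro!: sum.cong)
  finally show ?thesis .
qed

lemma idem_trace: assumes P: "P \<in> carrier_mat n n" and idem: "P * P = P"
  shows "\<exists>k::nat. mtr P = of_nat k"
proof -
  obtain es where "char_poly P = (\<Prod> a \<leftarrow> es. [:- a, 1:])"
    using char_poly_factorized[OF P] by blast
  from schur_upper_triangular[OF P this]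
  obtain B where B: "B \<in> carrier_mat n n" "upper_triangular B" "similar_mat P B" by blast
  from similar_matD[OF B(3)] obtain n' S T where
    ST: "{P,B,S,T} \<subseteq> carrier_mat n' n'" "S * T = 1\<^sub>m n'" "T * S = 1\<^sub>m n'" "P = S * B * T" by blast
  have n': "n' = n" using ST(1) P by auto
  have S: "S \<in> carrier_mat n n" and T: "T \<in> carrier_mat n n" using ST(1) n' by auto
  have BT: "B * T \<in> carrier_mat n n" using B T by auto
  have "mtr P = mtr (S * (B * T))" using ST(4) S B T by (simp add: assoc_mult_mat[of _ n n _ n _ n] mult_carrier_mat[of _ n n _ n])
  also have "\<dots> = mtr ((B * T) * S)" by (rule mtr_comm[OF S BT])
  also have "\<dots> = mtr B" using ST(3) n' B S T by (simp add: assoc_mult_mat[of _ n n _ n _ n] mult_carrier_mat[of _ n n _ n])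
  finally have trPB: "mtr P = mtr B" .
  have Beq: "B = T * P * S"
  proof -
    have "T * P * S = (T * S) * B * (T * S)" using ST(4) S B T
      by (simp add: assoc_mult_mat[of _ n n _ n _ n] mult_carrier_mat[of _ n n _ n])
    then show ?thesis using ST(3) n' B by simp
  qed
  have BB: "B * B = B"
  proof -
    have "B * B = T * P * (S * T) * P * S" using Beq S T P by (simp add: assoc_mult_mat[of _ n n _ n _ n] mult_carrier_mat[of _ n n _ n])
    also have "\<dots> = T * (P * P) * S" using ST(2) n' S T P by (simp add: assoc_mult_mat[of _ n n _ n _ n] mult_carrier_mat[of _ n n _ n])
    finally show ?thesis using idem Beq by simp
  qed
  have diag: "B $$ (i,i) = 0 \<or> B $$ (i,i) = 1" if i: "i < n" for i
  proof -
    have "(B * B) $$ (i,i) = (\<Sum>k<n. B$$(i,k) * B$$(k,i))"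
      using B i by (auto simp: scalar_prod_def lessThan_atLeast0 intro!: sum.cong)
    also have "\<dots> = (\<Sum>k\<in>{i}. B$$(i,k) * B$$(k,i))"
    proof (rule sum.mono_neutral_right)
      show "\<forall>k\<in>{..<n} - {i}. B $$ (i, k) * B $$ (k, i) = 0"
      proof
        fix k assume k: "k \<in> {..<n} - {i}"
        show "B $$ (i, k) * B $$ (k, i) = 0"
        proof (cases "k < i")
          case True then show ?thesis using B(1,2) i by (auto dest: upper_triangularD)
        next
          case False then have "i < k" using k by auto
          then show ?thesis using B(1,2) k by (auto dest: upper_triangularD)
        qed
      qed
    qed (use i in auto)
    finally have "B$$(i,i) * B$$(i,i) = B$$(i,i)" using BB by simp
    then show ?thesis
      by (metis mult_cancel_left1 mult_eq_0_iff)
  qed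
  have "mtr B = (\<Sum>i<n. of_nat (if B$$(i,i) = 1 then 1 else 0))"
    unfolding mtr_def using B(1) diag by (auto intro!: sum.cong) (metis)
  then show ?thesis using trPB by (metis of_nat_sum)
qed

definition sig :: "nat \<Rightarrow> nat" where
  "sig k = (if k < 6 then [2,4,0,5,1,3] ! k else k)"

lemma sig_inv[simp]: "sig (sig k) = k"
  unfolding sig_def by (cases "k<6") (auto simp: less_Suc_eq nth_Cons split: nat.splits) 

lemma sig_lt: "k < n \<Longrightarrow> 6 \<le> n \<Longrightarrow> sig k < n"
  unfolding sig_def by (cases "k<6") (auto simp: less_Suc_eq nth_Cons split: nat.splits) 

definition PU :: "nat \<Rightarrow> complex mat" where
  "PU n = mat n n (\<lambda>(i,j). if sig i = j then 1 else 0)"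

definition MM :: "nat \<Rightarrow> real mat" where
  "MM d = mat d d (\<lambda>(i,j). if i < 3 \<and> j < 3 then (if i = j then 0 else 1/2) else (if i = j then 1 else 0))"

lemma sig_swap: "(sig a = b) = (sig b = a)"
  by (metis sig_inv)

lemma PU_adj: "mat_adj (PU n) = PU n"
  by (rule eq_matI) (auto simp: mat_adj_def PU_def sig_swap[of i j for i j])

lemma PU_unitary: assumes "6 \<le> n" shows "PU n \<in> unitary_mats n"
proof -
  have "PU n * PU n = 1\<^sub>m n"
  proof (rule eq_matI)
    fix i j assume ij: "i < dim_row (1\<^sub>m n)" "j < dim_col (1\<^sub>m n)"
    have "(PU n * PU n) $$ (i,j) = (\<Sum>k<n. (if sig i = k then 1 else 0) * (if sig k = j then 1 else 0))"
      using ij by (auto simp: PU_def scalar_prod_def lessThan_atLeast0 intro!: sum.cong)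
    also have "\<dots> = (\<Sum>k<n. if sig i = k then (if sig k = j then 1 else 0) else 0)"
      by (rule sum.cong) auto
    also have "\<dots> = (if i = j then 1 else 0)"
      using sig_lt[of i n] ij assms by (auto simp: sum.delta)
    finally show "(PU n * PU n) $$ (i,j) = 1\<^sub>m n $$ (i,j)" using ij by simp
  qed (auto simp: PU_def)
  then show ?thesis unfolding unitary_mats_def by (simp add: PU_adj) (simp add: PU_def)
qed

lemma sum2: "(\<Sum>a<2. f a) = f 0 + f (1::nat)"
  by (simp add: numeral_2_eq_2)

lemma sigvals: "sig 0 = 2" "sig 1 = 4" "sig 2 = 0" "sig 3 = 5" "sig 4 = 1" "sig 5 = 3"
  by (simp_all add: sig_def)

lemma PU_phi: assumes "3 \<le> d" shows "phi d 2 (PU (d*2)) = MM d"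
proof (rule eq_matI)
  fix i j assume ij: "i < dim_row (MM d)" "j < dim_col (MM d)"
  then have i: "i < d" and j: "j < d" by (auto simp: MM_def)
  have e: "PU (d*2) $$ (i*2+a, j*2+b) = (if sig (i*2+a) = j*2+b then 1 else 0)" if "a < 2" "b < 2" for a b
    using i j that by (auto simp: PU_def)
  have "frob_sq (block 2 (PU (d*2)) i j) = (\<Sum>a<2. \<Sum>b<2. (if sig (i*2+a) = j*2+b then 1 else 0))"
    unfolding frob_block by (auto simp: e intro!: sum.cong)
  also have "\<dots> = (if i < 3 \<and> j < 3 then (if i = j then 0 else 1) else (if i = j then 2 else 0))"
  proof (cases "i < 3 \<and> j < 3")
    case True
    then have "i = 0 \<or> i = 1 \<or> i = 2" "j = 0 \<or> j = 1 \<or> j = 2" by auto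
    then show ?thesis by (elim disjE) (simp_all add: sum2 sig_def)
  next
    case False
    show ?thesis
    proof (cases "3 \<le> i")
      case True
      then have s: "sig (i*2+a) = i*2+a" for a by (simp add: sig_def)
      have "(\<Sum>a<2. \<Sum>b<2. (if sig (i*2+a) = j*2+b then 1 else 0::real)) =
        (if i*2 = j*2 then 1 else 0) + (if i*2 = j*2+1 then 1 else 0) + (if i*2+1 = j*2 then 1 else 0) + (if i*2+1 = j*2+1 then 1 else 0)"
        by (simp add: s sum2)
      then show ?thesis using True by auto
    next
      case False
      then have "i < 3" "3 \<le> j" using \<open>\<not> (i < 3 \<and> j < 3)\<close> by auto
      then have "sig (i*2+a) \<noteq> j*2+b" if "a < 2" for a b
        using sig_lt[of "i*2+a" 6] that by auto
      then show ?thesis using \<open>i < 3\<close> \<open>3 \<le> j\<close> by auto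
    qed
  qed
  finally show "phi d 2 (PU (d*2)) $$ (i,j) = MM d $$ (i,j)"
    using i j by (auto simp: phi_def MM_def)
qed (auto simp: phi_def MM_def)

lemma adj_carrier: "X \<in> carrier_mat n m \<Longrightarrow> mat_adj X \<in> carrier_mat m n"
  by (auto simp: mat_adj_def)

lemma not_in: assumes d: "3 \<le> d" shows "MM d \<notin> Uds d 3"
proof
  assume "MM d \<in> Uds d 3"
  then obtain U where U: "U \<in> unitary_mats (d*3)" "MM d = phi d 3 U" by (auto simp: Uds_def)
  have Uc: "U \<in> carrier_mat (d*3) (d*3)" and UU: "U * mat_adj U = 1\<^sub>m (d*3)"
    and UaU: "mat_adj U * U = 1\<^sub>m (d*3)" using U(1) by (auto simp: unitary_mats_def)
  have fr: "frob_sq (block 3 U i j) = 3 * MM d $$ (i,j)" if "i<d" "j<d" for i j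
    using U(2) that by (simp add: phi_def)
  have zero: "U $$ (i*3+a, j*3+b) = 0" if ij: "i<d" "j<d" "MM d $$ (i,j) = 0" and ab: "a<3" "b<3" for i j a b
  proof -
    have "(\<Sum>a<3. \<Sum>b<3. (cmod (U$$(i*3+a,j*3+b)))^2) = 0"
      using fr[OF ij(1,2)] ij(3) by (simp add: frob_block)
    then have "(\<Sum>b<3. (cmod (U$$(i*3+a,j*3+b)))^2) = 0"
      using ab by (subst (asm) sum_nonneg_eq_0_iff) (auto intro: sum_nonneg)
    then have "(cmod (U$$(i*3+a,j*3+b)))^2 = 0"
      using ab by (subst (asm) sum_nonneg_eq_0_iff) auto
    then show ?thesis by simp
  qed
  have F1: "U $$ (a, j*3+b) = 0" if "j<d" "j \<noteq> 1" "j \<noteq> 2" "a<3" "b<3" for j a b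
    using zero[of 0 j a b] that d by (auto simp: MM_def)
  have F2a: "U $$ (3+a, 3+b) = 0" if "a<3" "b<3" for a b
    using zero[of 1 1 a b] that d by (auto simp: MM_def)
  have F2b: "U $$ (6+a, 6+b) = 0" if "a<3" "b<3" for a b
    using zero[of 2 2 a b] that d by (auto simp: MM_def)
  have F3: "U $$ (m*3+a, 3+b) = 0" if "3 \<le> m" "m < d" "a<3" "b<3" for m a b
    using zero[of m 1 a b] that d by (auto simp: MM_def)
  have E1: "(\<Sum>c<3. U$$(a,3+c) * cnj (U$$(a',3+c))) + (\<Sum>c<3. U$$(a,6+c) * cnj (U$$(a',6+c)))
      = (if a = a' then 1 else 0)" if aa: "a<3" "a'<3" for a a'
  proof -
    let ?G = "\<lambda>j. \<Sum>c<3. U$$(a,j*3+c) * cnj (U$$(a',j*3+c))"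
    have "(U * mat_adj U) $$ (a,a') = (\<Sum>k<d*3. U$$(a,k) * cnj (U$$(a',k)))"
      using Uc aa d by (auto simp: mat_adj_def scalar_prod_def lessThan_atLeast0 intro!: sum.cong)
    also have "\<dots> = (\<Sum>j<d. ?G j)" by (rule sum_blocks)
    also have "\<dots> = (\<Sum>j\<in>{1,2}. ?G j)"
      by (rule sum.mono_neutral_right) (use d F1 aa in auto)
    also have "\<dots> = ?G 1 + ?G 2" by simp
    finally show ?thesis using UU aa d by (simp add: add.commute)
  qed
  have E2: "(\<Sum>c<3. cnj (U$$(c,3+b)) * U$$(c,6+b')) = 0" if bb: "b<3" "b'<3" for b b'
  proof -
    let ?G = "\<lambda>j. \<Sum>c<3. cnj (U$$(j*3+c,3+b)) * U$$(j*3+c,6+b')"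
    have "(mat_adj U * U) $$ (3+b,6+b') = (\<Sum>k<d*3. cnj (U$$(k,3+b)) * U$$(k,6+b'))"
      using Uc bb d by (auto simp: mat_adj_def scalar_prod_def lessThan_atLeast0 intro!: sum.cong)
    also have "\<dots> = (\<Sum>j<d. ?G j)" by (rule sum_blocks)
    also have "\<dots> = (\<Sum>j\<in>{0}. ?G j)"
    proof (rule sum.mono_neutral_right)
      show "\<forall>j\<in>{..<d} - {0}. ?G j = 0"
      proof
        fix j assume j: "j \<in> {..<d} - {0}"
        show "?G j = 0"
        proof (cases "j = 1 \<or> j = 2")
          case True then show ?thesis using F2a F2b bb by (auto simp: add.commute)
        next
          case False then have "3 \<le> j" "j < d" using j by auto
          then show ?thesis using F3 bb by auto
        qed
      qed
    qed (use d in auto)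
    finally show ?thesis using UaU bb d by simp
  qed
  define A where "A = block 3 U 0 1"
  define B where "B = block 3 U 0 2"
  have A: "A \<in> carrier_mat 3 3" and B: "B \<in> carrier_mat 3 3"
    by (auto simp: A_def B_def block_def)
  have Ae: "A $$ (a,b) = U $$ (a, 3+b)" if "a<3" "b<3" for a b using that by (simp add: A_def block_def)
  have Be: "B $$ (a,b) = U $$ (a, 6+b)" if "a<3" "b<3" for a b using that by (simp add: B_def block_def)
  define P where "P = A * mat_adj A"
  define Q where "Q = B * mat_adj B"
  have P: "P \<in> carrier_mat 3 3" and Q: "Q \<in> carrier_mat 3 3"
    using A B by (auto simp: P_def Q_def mat_adj_def)
  have PQ1: "P + Q = 1\<^sub>m 3"
  proof (rule eq_matI)
    fix a a' assume "a < dim_row (1\<^sub>m 3)" "a' < dim_col (1\<^sub>m 3)"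
    then have aa: "a < 3" "a' < 3" by auto
    have "(P + Q) $$ (a,a') = (\<Sum>c<3. U$$(a,3+c) * cnj (U$$(a',3+c))) + (\<Sum>c<3. U$$(a,6+c) * cnj (U$$(a',6+c)))"
      using aa A B by (auto simp: P_def Q_def mat_adj_def scalar_prod_def lessThan_atLeast0 Ae Be intro!: sum.cong)
    then show "(P + Q) $$ (a,a') = 1\<^sub>m 3 $$ (a,a')" using E1[OF aa] aa by simp
  qed (use P Q in auto)
  have AB0: "mat_adj A * B = 0\<^sub>m 3 3"
  proof (rule eq_matI)
    fix b b' assume "b < dim_row (0\<^sub>m 3 3 :: complex mat)" "b' < dim_col (0\<^sub>m 3 3 :: complex mat)"
    then have bb: "b < 3" "b' < 3" by auto
    have "(mat_adj A * B) $$ (b,b') = (\<Sum>c<3. cnj (U$$(c,3+b)) * U$$(c,6+b'))"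
      using bb A B by (auto simp: mat_adj_def scalar_prod_def lessThan_atLeast0 Ae Be intro!: sum.cong)
    then show "(mat_adj A * B) $$ (b,b') = 0\<^sub>m 3 3 $$ (b,b')" using E2[OF bb] bb by simp
  qed (use A B in \<open>auto simp: mat_adj_def\<close>)
  have Aa: "mat_adj A \<in> carrier_mat 3 3" and Ba: "mat_adj B \<in> carrier_mat 3 3"
    using A B by (auto intro: adj_carrier)
  have PQ0: "P * Q = 0\<^sub>m 3 3"
  proof -
    have "P * Q = A * ((mat_adj A * B) * mat_adj B)"
      unfolding P_def Q_def using A B Aa Ba
      by (simp add: assoc_mult_mat[of _ 3 3 _ 3 _ 3] mult_carrier_mat[of _ 3 3 _ 3])
    then show ?thesis using AB0 A Ba by simp
  qed
  have PP: "P * P = P"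
  proof -
    have "P = P * (P + Q)" using PQ1 P by simp
    also have "\<dots> = P * P + P * Q" using P Q by (simp add: mult_add_distrib_mat)
    finally show ?thesis using PQ0 P by simp
  qed
  obtain k :: nat where k: "mtr P = of_nat k" using idem_trace[OF P PP] by blast
  have "frob_sq A = Re (mtr P)" using A by (simp add: frob_sq_def mtr_def P_def)
  then have "frob_sq A = real k" using k by simp
  moreover have "frob_sq A = 3/2" using fr[of 0 1] d by (simp add: A_def MM_def)
  ultimately have "real k * 2 = 3" by simp
  then have "k * 2 = 3" by linarith
  then show False by presburger
qed

theorem corollary3p14:
  fixes d :: nat
  assumes "d \<ge> 3"
  shows "\<exists>s t. 1 \<le> s \<and> s < t \<and> \<not> (Uds d s \<subseteq> Uds d t)"
proof (intro exI conjI)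
  have "MM d \<in> Uds d 2"
  proof -
    have "6 \<le> d*2" using assms by linarith
    then have "PU (d*2) \<in> unitary_mats (d*2)" by (rule PU_unitary)
    then show ?thesis unfolding Uds_def using PU_phi[OF assms] by (metis image_eqI)
  qed
  then show "\<not> (Uds d 2 \<subseteq> Uds d 3)" using not_in[OF assms] by blast
qed auto

end
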